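(* Let $3\le h\le n-1$. The distance characteristic polynomial of $K^{h}_{n}$ is $$P_D(\lambda)=(\lambda+1)^{h-2}(\lambda+2)^{n-h-1}\bigl[\lambda^{3}+(h+4-2n)\lambda^{2}+(5-2h-2nh+2h^{2}-n)\lambda-nh+h^{2}-2h+2\bigr].$$ Moreover, if $\lambda_1\ge\lambda_2\ge\cdots\ge\lambda_n$ is the distance spectrum of $K^{h}_{n}$, then $\lambda_1>0$, $-1<\lambda_2<-\frac12$, $\lambda_3=-1$, $\lambda_{n-1}\in\{-1,-2\}$ and $\lambda_n<-2$.
   Context: For a connected graph $G$, the distance matrix $D(G)$ has as $(i,j)$-entry the distance between the $i$-th and $j$-th vertices; the distance characteristic polynomial is $P_D(\lambda)=\det(\lambda I-D(G))$ and the distance spectrum consists of the eigenvalues of $D(G)$. $K^{h}_{n}$ denotes the graph on $n$ vertices obtained from the complete graph $K_h$ by attaching $n-h$ pendant edges to one vertex of $K_h$. *)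

theory Defs
  imports "Jordan_Normal_Form.Determinant" "Jordan_Normal_Form.Char_Poly"
begin

(* Graphs on vertex set {0..<n} given by a symmetric irreflexive edge relation. *)

fun walk :: "(nat \<Rightarrow> nat \<Rightarrow> bool) \<Rightarrow> nat \<Rightarrow> nat \<Rightarrow> nat \<Rightarrow> bool" where
  "walk E u v 0 = (u = v)"
| "walk E u v (Suc k) = (\<exists>w. E u w \<and> walk E w v k)"

(* graph distance: length of a shortest walk (graph assumed connected) *)
definition gdist :: "(nat \<Rightarrow> nat \<Rightarrow> bool) \<Rightarrow> nat \<Rightarrow> nat \<Rightarrow> nat" where
  "gdist E u v = (LEAST k. walk E u v k)"

definition dist_matrix :: "nat \<Rightarrow> (nat \<Rightarrow> nat \<Rightarrow> bool) \<Rightarrow> real mat" where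
  "dist_matrix n E = mat n n (\<lambda>(i, j). real (gdist E i j))"

(* K^h_n: complete graph K_h on vertices 0..h-1, plus n-h pendant vertices
   h..n-1 each joined to vertex 0 *)
definition Khn_edge :: "nat \<Rightarrow> nat \<Rightarrow> nat \<Rightarrow> nat \<Rightarrow> bool" where
  "Khn_edge n h i j \<longleftrightarrow> i \<noteq> j \<and> i < n \<and> j < n \<and>
     ((i < h \<and> j < h) \<or> (i = 0 \<and> h \<le> j) \<or> (j = 0 \<and> h \<le> i))"

definition dist_char_poly :: "nat \<Rightarrow> (nat \<Rightarrow> nat \<Rightarrow> bool) \<Rightarrow> real poly" where
  "dist_char_poly n E = char_poly (dist_matrix n E)"

definition is_dist_spectrum :: "nat \<Rightarrow> (nat \<Rightarrow> nat \<Rightarrow> bool) \<Rightarrow> real list \<Rightarrow> bool" where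
  "is_dist_spectrum n E ls \<longleftrightarrow> length ls = n \<and> sorted_wrt (\<ge>) ls \<and>
     dist_char_poly n E = (\<Prod>l\<leftarrow>ls. [:- l, 1:])"

end

theory Submission
  imports Defs
begin

lemma sylvester_det:
  fixes A :: "'a :: idom mat"
  assumes A: "A \<in> carrier_mat n m" and B: "B \<in> carrier_mat m n"
  shows "det (1\<^sub>m n + A * B) = det (1\<^sub>m m + B * A)"
proof -
  define M where "M = four_block_mat (1\<^sub>m m) (-B) A (1\<^sub>m n)"
  define P where "P = four_block_mat (1\<^sub>m m) B (0\<^sub>m n m) (1\<^sub>m n)"
  have M: "M \<in> carrier_mat (m+n) (m+n)" unfolding M_def using A B by auto
  have P: "P \<in> carrier_mat (m+n) (m+n)" unfolding P_def using A B by auto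
  have detP: "det P = 1" unfolding P_def
    by (subst det_four_block_mat_lower_left_zero[of _ m _ n], insert B, auto)
  have "M * P = four_block_mat (1\<^sub>m m) (0\<^sub>m m n) A (A * B + 1\<^sub>m n)"
    unfolding M_def P_def
    by (subst mult_four_block_mat, insert A B, auto)
  hence "det (M * P) = det (A * B + 1\<^sub>m n)"
    by (simp, subst det_four_block_mat_upper_right_zero[of _ m _ n], insert A B, auto)
  moreover have "A * B + 1\<^sub>m n = 1\<^sub>m n + A * B"
    by (rule comm_add_mat[of _ n n], insert A B, auto)
  ultimately have 1: "det M = det (1\<^sub>m n + A * B)" using det_mult[OF M P] detP by simp
  have "P * M = four_block_mat (1\<^sub>m m + B * A) (0\<^sub>m m n) A (1\<^sub>m n)"
    unfolding M_def P_def
    by (subst mult_four_block_mat, insert A B, auto)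
  hence "det (P * M) = det (1\<^sub>m m + B * A)"
    by (simp, subst det_four_block_mat_upper_right_zero[of _ m _ n], insert A B, auto)
  hence 2: "det M = det (1\<^sub>m m + B * A)" using det_mult[OF P M] detP by simp
  show ?thesis using 1 2 by simp
qed

lemma mat_delete_mat: "mat_delete (mat (Suc k) (Suc k) f) i j =
   mat k k (\<lambda>(a,b). f (if a<i then a else Suc a, if b<j then b else Suc b))"
  unfolding mat_delete_def by (rule eq_matI, auto)

lemma det1: "det (mat 1 1 f) = f (0,0)"
  by (subst laplace_expansion_column[of _ 1 0], auto simp: cofactor_def mat_delete_mat)

lemma det2: "det (mat 2 2 f) = f (0,0) * f (1,1) - f (0,1) * f (1,0)"
  apply (subst laplace_expansion_column[of _ 2 0], simp, simp)
  apply (simp add: cofactor_def numeral_2_eq_2 lessThan_Suc mat_delete_mat del: One_nat_def)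
  apply (simp add: det1[unfolded One_nat_def])
  done

lemma det3: "det (mat 3 3 f) = f (0,0) * (f (1,1) * f (2,2) - f (1,2) * f (2,1))
    - f (1,0) * (f (0,1) * f (2,2) - f (0,2) * f (2,1))
    + f (2,0) * (f (0,1) * f (1,2) - f (0,2) * f (1,1))"
  apply (subst laplace_expansion_column[of _ 3 0], simp, simp)
  apply (simp add: cofactor_def numeral_3_eq_3 lessThan_Suc mat_delete_mat del: One_nat_def)
  apply (simp add: det2[unfolded numeral_2_eq_2])
  apply (simp add: numeral_2_eq_2 algebra_simps)
  done

definition cls :: "nat \<Rightarrow> nat \<Rightarrow> nat" where
  "cls h i = (if i = 0 then 2 else if i < h then 0 else 1)"
definition Kc :: "nat \<Rightarrow> nat \<Rightarrow> real" where
  "Kc c d = (if c = 2 \<and> d = 2 then 0 else if c = 0 \<and> d = 0 then 1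
     else if c = 2 \<or> d = 2 then 1 else 2)"

lemma walk1: "walk E u v 1 \<longleftrightarrow> E u v" by simp
lemma walk2: "walk E u v 2 \<longleftrightarrow> (\<exists>w. E u w \<and> E w v)" by (simp add: numeral_2_eq_2)

lemma gdist_Khn:
  assumes h: "0 < h" and i: "i < n" and j: "j < n"
  shows "real (gdist (Khn_edge n h) i j) = (if i = j then 0 else Kc (cls h i) (cls h j))"
proof -
  let ?E = "Khn_edge n h"
  have edge: "?E i j \<longleftrightarrow> i \<noteq> j \<and> (i = 0 \<or> j = 0 \<or> (i < h \<and> j < h))"
    using i j h unfolding Khn_edge_def by auto
  show ?thesis
  proof (cases "i = j")
    case True
    then show ?thesis unfolding gdist_def by (simp add: Least_eq_0)
  next
    case ne: False
    show ?thesis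
    proof (cases "?E i j")
      case True
      have "gdist ?E i j = 1" unfolding gdist_def
        by (rule Least_equality, use True ne in auto, case_tac y, auto)
      moreover have "Kc (cls h i) (cls h j) = 1" using True ne edge
        unfolding Kc_def cls_def by auto
      ultimately show ?thesis using ne by simp
    next
      case False
      have w2: "walk ?E i j 2" unfolding walk2
        by (rule exI[of _ 0], insert False ne edge i j h, auto simp: Khn_edge_def)
      have "gdist ?E i j = 2" unfolding gdist_def
      proof (rule Least_equality[where P="\<lambda>k. walk ?E i j k", OF w2])
        fix y assume "walk ?E i j y"
        then show "2 \<le> y" using ne False
          by (cases y; cases "y - 1"; auto)
      qed
      moreover have "Kc (cls h i) (cls h j) = 2" using False ne edge
        unfolding Kc_def cls_def by auto
      ultimately show ?thesis using ne by simp
    qed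
  qed
qed


lemma diag_mult_index:
  assumes M: "M \<in> carrier_mat n m" and i: "i < n" and j: "j < m"
  shows "(mat n n (\<lambda>(i,j). if i = j then d i else 0) * M) $$ (i,j) = d i * M $$ (i,j)"
proof -
  have "(mat n n (\<lambda>(i,j). if i = j then d i else 0) * M) $$ (i,j) =
     (\<Sum>k\<in>{0..<n}. (if i = k then d i else 0) * M $$ (k,j))"
    using M i j by (simp add: scalar_prod_def)
  also have "\<dots> = (\<Sum>k\<in>{0..<n}. if k = i then d i * M $$ (i,j) else 0)"
    by (rule sum.cong, auto)
  also have "\<dots> = d i * M $$ (i,j)" using i by simp
  finally show ?thesis .
qed

lemma cls_lt3: "cls h i < 3" unfolding cls_def by auto

lemma cls_count:
  assumes "h \<le> n" "0 < h"
  shows "card {j\<in>{0..<n}. cls h j = c} = (if c = 0 then h - 1 else if c = 1 then n - h else if c = 2 then 1 else 0)"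
proof -
  have "{j\<in>{0..<n}. cls h j = c} = (if c = 0 then {1..<h} else if c = 1 then {h..<n} else if c = 2 then {0} else {})"
    using assms unfolding cls_def by auto
  then show ?thesis by simp
qed

lemma det3_div: "det (mat 3 3 (\<lambda>(c,d). g c d / v c)) = det (mat 3 3 (\<lambda>(c,d). g c d)) / (v 0 * v 1 * v 2)"
      if "v 0 \<noteq> 0" "v 1 \<noteq> 0" "v 2 \<noteq> (0::real)" for g v
      using that by (simp add: det3 field_simps)

lemma det3_poly: "3 \<le> h \<Longrightarrow> h < n \<Longrightarrow> det (mat 3 3 (\<lambda>(c,d). ((if c = d then dv c else 0) - Kc c d * real (cnt d)))) =
      x^3 + (real h + 4 - 2 * real n) * x^2 +
      (5 - 2 * real h - 2 * real n * real h + 2 * (real h)^2 - real n) * x +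
      (- real n * real h + (real h)^2 - 2 * real h + 2)"
 if "dv = (\<lambda>c. (if c = 0 then x + 1 else if c = 1 then x + 2 else x))"
   "cnt = (\<lambda>c. (if c = 0 then h - 1 else if c = 1 then n - h else if c = 2 then 1 else (0::nat)))"
 for x :: real
      unfolding det3 that by (simp add: Kc_def of_nat_diff algebra_simps power2_eq_square power3_eq_cube)


lemma det_eval:
  fixes x :: real
  assumes h: "3 \<le> h" "h < n" and x: "x \<noteq> 0" "x \<noteq> -1" "x \<noteq> -2"
  shows "poly (dist_char_poly n (Khn_edge n h)) x =
    (x+1)^(h-2) * (x+2)^(n-h-1) * (x^3 + (real h + 4 - 2 * real n) * x^2 +
      (5 - 2 * real h - 2 * real n * real h + 2 * (real h)^2 - real n) * x +
      (- real n * real h + (real h)^2 - 2 * real h + 2))"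
proof -
  define Dm where "Dm = dist_matrix n (Khn_edge n h)"
  have Dm: "Dm \<in> carrier_mat n n" unfolding Dm_def dist_matrix_def by auto
  have Dm_idx: "Dm $$ (i,j) = (if i = j then 0 else Kc (cls h i) (cls h j))" if "i < n" "j < n" for i j
    using gdist_Khn[of h i n j] h that unfolding Dm_def dist_matrix_def by auto
  define dv where "dv c = (if c = 0 then x + 1 else if c = 1 then x + 2 else x)" for c :: nat
  have dv0: "dv c \<noteq> 0" for c using x unfolding dv_def by auto
  define cnt where "cnt c = (if c = 0 then h - 1 else if c = 1 then n - h else if c = 2 then 1 else 0)" for c :: nat
  define Cm where "Cm = mat n n (\<lambda>(i,j). (if i = j then x else 0) - Dm $$ (i,j))"
  define Dl where "Dl = mat n n (\<lambda>(i,j). if i = j then dv (cls h i) else 0)"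
  define U where "U = mat n 3 (\<lambda>(i,c). if cls h i = c then 1 else (0::real))"
  define W where "W = mat 3 n (\<lambda>(c,j). - Kc c (cls h j) / dv c)"
  have U: "U \<in> carrier_mat n 3" and W: "W \<in> carrier_mat 3 n" and Dl: "Dl \<in> carrier_mat n n"
    unfolding U_def W_def Dl_def by auto
  have "poly (dist_char_poly n (Khn_edge n h)) x = det Cm"
    unfolding dist_char_poly_def Dm_def[symmetric] char_poly_def
    by (rule poly_det_cong[of _ n], unfold Cm_def, insert Dm, auto simp: char_poly_matrix_def)
  have UW: "(U * W) $$ (i,j) = W $$ (cls h i, j)" if "i < n" "j < n" for i j
  proof -
    have "(U * W) $$ (i,j) = (\<Sum>c\<in>{0..<3}. (if cls h i = c then 1 else 0) * W $$ (c,j))"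
      using that U W by (simp add: scalar_prod_def U_def)
    also have "\<dots> = (\<Sum>c\<in>{0..<3}. if c = cls h i then W $$ (cls h i, j) else 0)"
      by (rule sum.cong, auto)
    also have "\<dots> = W $$ (cls h i, j)" using cls_lt3[of h i] by simp
    finally show ?thesis .
  qed
  have "Cm = Dl * (1\<^sub>m n + U * W)"
  proof (rule eq_matI)
    fix i j assume ij: "i < dim_row (Dl * (1\<^sub>m n + U * W))" "j < dim_col (Dl * (1\<^sub>m n + U * W))"
    hence i: "i < n" and j: "j < n" using Dl U W by auto
    have "(Dl * (1\<^sub>m n + U * W)) $$ (i,j) = dv (cls h i) * (1\<^sub>m n + U * W) $$ (i,j)"
      unfolding Dl_def by (rule diag_mult_index, insert U W i j, auto)
    also have "\<dots> = dv (cls h i) * ((if i = j then 1 else 0) + W $$ (cls h i, j))"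
      using i j U W UW by simp
    also have "\<dots> = (if i = j then x else 0) - Dm $$ (i,j)"
      using i j cls_lt3[of h i] dv0[of "cls h i"] unfolding Dm_idx[OF i j] W_def
      by (auto simp: field_simps Kc_def dv_def cls_def)
    finally show "Cm $$ (i,j) = (Dl * (1\<^sub>m n + U * W)) $$ (i,j)" unfolding Cm_def using i j by simp
  qed (insert Dl U W, auto simp: Cm_def)
  hence "det Cm = det Dl * det (1\<^sub>m n + U * W)"
    using det_mult[OF Dl, of "1\<^sub>m n + U * W"] U W by auto
  also have "det (1\<^sub>m n + U * W) = det (1\<^sub>m 3 + W * U)"
    by (rule sylvester_det[OF U W])
  also have "1\<^sub>m 3 + W * U = mat 3 3 (\<lambda>(c,d). (if c = d then 1 else 0) - Kc c d * real (cnt d) / dv c)"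
  proof (rule eq_matI)
    fix c d assume "c < dim_row (mat 3 3 (\<lambda>(c,d). (if c = d then 1 else 0) - Kc c d * real (cnt d) / dv c))"
       "d < dim_col (mat 3 3 (\<lambda>(c,d). (if c = d then 1 else 0) - Kc c d * real (cnt d) / dv c))"
    hence c: "c < 3" and d: "d < 3" by auto
    have "(W * U) $$ (c,d) = (\<Sum>j\<in>{0..<n}. (- Kc c (cls h j) / dv c) * (if cls h j = d then 1 else 0))"
      using c d U W by (simp add: scalar_prod_def U_def W_def)
    also have "\<dots> = (\<Sum>j\<in>{0..<n}. if cls h j = d then - Kc c d / dv c else 0)"
      by (rule sum.cong, auto)
    also have "\<dots> = (\<Sum>j\<in>{j\<in>{0..<n}. cls h j = d}. - Kc c d / dv c)"
      by (subst sum.inter_filter, auto)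
    also have "\<dots> = real (cnt d) * (- Kc c d / dv c)"
      using cls_count[of h n d] h unfolding cnt_def by simp
    finally show "(1\<^sub>m 3 + W * U) $$ (c,d) = mat 3 3 (\<lambda>(c,d). (if c = d then 1 else 0) - Kc c d * real (cnt d) / dv c) $$ (c,d)"
      using c d U W by simp
  qed (insert U W, auto)
  also have "det Dl = x * (x+1)^(h-1) * (x+2)^(n-h)"
  proof -
    have "det Dl = prod_list (diag_mat Dl)"
      by (rule det_upper_triangular[OF _ Dl], auto simp: Dl_def upper_triangular_def)
    also have "\<dots> = (\<Prod>i\<in>{0..<n}. dv (cls h i))"
      unfolding diag_mat_def Dl_def by (simp add: prod.list_conv_set_nth atLeast0LessThan)
    also have "{0..<n} = insert 0 ({1..<h} \<union> {h..<n})" using h by auto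
    also have "(\<Prod>i\<in>insert 0 ({1..<h} \<union> {h..<n}). dv (cls h i)) =
       dv (cls h 0) * ((\<Prod>i\<in>{1..<h}. dv (cls h i)) * (\<Prod>i\<in>{h..<n}. dv (cls h i)))"
      using h by (subst prod.insert, auto simp: prod.union_disjoint)
    also have "(\<Prod>i\<in>{1..<h}. dv (cls h i)) = (\<Prod>i\<in>{1..<h}. x + 1)"
      using h by (intro prod.cong, auto simp: dv_def cls_def)
    also have "(\<Prod>i\<in>{h..<n}. dv (cls h i)) = (\<Prod>i\<in>{h..<n}. x + 2)"
      using h by (intro prod.cong, auto simp: dv_def cls_def)
    finally show ?thesis by (simp add: dv_def cls_def)
  qed
  finally have detC: "det Cm = x * (x+1)^(h-1) * (x+2)^(n-h) * det (mat 3 3 (\<lambda>(c,d). (if c = d then 1 else 0) - Kc c d * real (cnt d) / dv c))" .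
  define Q where "Q = det (mat 3 3 (\<lambda>(c,d). (if c = d then 1 else 0) - Kc c d * real (cnt d) / dv c))"
  define cub where "cub = x^3 + (real h + 4 - 2 * real n) * x^2 +
      (5 - 2 * real h - 2 * real n * real h + 2 * (real h)^2 - real n) * x +
      (- real n * real h + (real h)^2 - 2 * real h + 2)"
  have nz: "x * (x+1) * (x+2) \<noteq> 0" using x by (auto simp: add_eq_0_iff)
  have Qc: "x * (x+1) * (x+2) * Q = cub"
  proof -
    have "mat 3 3 (\<lambda>(c,d). (if c = d then 1 else 0) - Kc c d * real (cnt d) / dv c)
       = mat 3 3 (\<lambda>(c,d). ((if c = d then dv c else 0) - Kc c d * real (cnt d)) / dv c)"
      using dv0 by (intro eq_matI, auto simp: diff_divide_distrib)
    also have "det \<dots> = det (mat 3 3 (\<lambda>(c,d). ((if c = d then dv c else 0) - Kc c d * real (cnt d)))) / (dv 0 * dv 1 * dv 2)"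
      by (rule det3_div[where v = dv and g = "\<lambda>c d. (if c = d then dv c else 0) - Kc c d * real (cnt d)"], rule dv0, rule dv0, rule dv0)
    also have "det (mat 3 3 (\<lambda>(c,d). ((if c = d then dv c else 0) - Kc c d * real (cnt d)))) =
      x^3 + (real h + 4 - 2 * real n) * x^2 +
      (5 - 2 * real h - 2 * real n * real h + 2 * (real h)^2 - real n) * x +
      (- real n * real h + (real h)^2 - 2 * real h + 2)"
      by (rule det3_poly[OF _ _ h], auto simp: dv_def cnt_def fun_eq_iff)
    also have "dv 0 * dv 1 * dv 2 = x * (x+1) * (x+2)" unfolding dv_def by simp
    finally show ?thesis using nz unfolding Q_def cub_def by simp
  qed
  define k where "k = h - 2"
  define m where "m = n - h - 1"
  have e1: "h - 1 = Suc k" and k: "h - 2 = k" and e2: "n - h = Suc m" and m: "n - h - 1 = m"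
    unfolding k_def m_def using h by arith+
  have "det Cm = x * ((x+1)^(h-2) * (x+1)) * ((x+2)^(n-h-1) * (x+2)) * Q"
    unfolding detC Q_def[symmetric] k m e1 e2 power_Suc2 by simp
  also have "\<dots> = (x+1)^(h-2) * (x+2)^(n-h-1) * (x * (x+1) * (x+2) * Q)"
    by (simp only: ac_simps)
  finally show ?thesis using \<open>poly (dist_char_poly n (Khn_edge n h)) x = det Cm\<close> Qc cub_def by simp
qed


lemma poly_eq_cofinite:
  fixes p q :: "real poly"
  assumes F: "finite F" and eq: "\<And>x. x \<notin> F \<Longrightarrow> poly p x = poly q x"
  shows "p = q"
proof (rule ccontr)
  assume "p \<noteq> q"
  hence "p - q \<noteq> 0" by simp
  hence fin: "finite {x. poly (p - q) x = 0}" by (rule poly_roots_finite)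
  have "UNIV - F \<subseteq> {x. poly (p - q) x = 0}" using eq by auto
  hence "finite (UNIV - F)" using fin finite_subset by blast
  hence "finite (UNIV :: real set)" using F by (metis Diff_infinite_finite)
  thus False by (simp add: infinite_UNIV_char_0)
qed

lemma charpoly_Khn:
  assumes h: "3 \<le> h" "h \<le> n - 1"
  shows "dist_char_poly n (Khn_edge n h) =
           [:1, 1:] ^ (h - 2) * [:2, 1:] ^ (n - h - 1) *
           [: - real n * real h + (real h)^2 - 2 * real h + 2,
              5 - 2 * real h - 2 * real n * real h + 2 * (real h)^2 - real n,
              real h + 4 - 2 * real n,
              1 :]"
proof (rule poly_eq_cofinite[of "{0, -1, -2}"])
  fix x :: real assume "x \<notin> {0, -1, -2}"
  hence x: "x \<noteq> 0" "x \<noteq> -1" "x \<noteq> -2" by auto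
  have hn: "h < n" using h by auto
  show "poly (dist_char_poly n (Khn_edge n h)) x = poly ([:1, 1:] ^ (h - 2) * [:2, 1:] ^ (n - h - 1) *
           [: - real n * real h + (real h)^2 - 2 * real h + 2,
              5 - 2 * real h - 2 * real n * real h + 2 * (real h)^2 - real n,
              real h + 4 - 2 * real n,
              1 :]) x"
    unfolding det_eval[OF h(1) hn x]
    by (simp add: algebra_simps power2_eq_square power3_eq_cube)
qed simp

lemma order_prod_linear:
  "order a (\<Prod>l\<leftarrow>xs. [:- l, 1:]) = count (mset xs) (a::real)"
proof (induction xs)
  case Nil
  then show ?case by (simp add: order_0I)
next
  case (Cons l xs)
  have nz: "(\<Prod>l\<leftarrow>xs. [:- l, 1:]) \<noteq> (0 :: real poly)"
    by (auto simp: prod_list_zero_iff)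
  have "order a ([:- l, 1:] * (\<Prod>l\<leftarrow>xs. [:- l, 1:])) = order a [:-l,1:] + order a (\<Prod>l\<leftarrow>xs. [:- l, 1:])"
    by (rule order_mult, rule no_zero_divisors[OF _ nz], simp)
  moreover have "order a [:-l,1:] = (if a = l then 1 else 0)"
    using order_power_n_n[of l 1] by (auto intro: order_0I)
  ultimately show ?case using Cons by simp
qed



lemma cubic_roots:
  fixes h n :: nat
  assumes h: "3 \<le> h" "h < n"
  defines "G \<equiv> [: - real n * real h + (real h)^2 - 2 * real h + 2,
              5 - 2 * real h - 2 * real n * real h + 2 * (real h)^2 - real n,
              real h + 4 - 2 * real n, 1 :]"
  shows "\<exists>r1 r2 r3. G = [:-r1,1:] * [:-r2,1:] * [:-r3,1:] \<and> 0 < r1 \<and> -1 < r2 \<and> r2 < -1/2 \<and> r3 < -2"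
proof -
  define c0 where "c0 = - real n * real h + (real h)^2 - 2 * real h + 2"
  define c1 where "c1 = 5 - 2 * real h - 2 * real n * real h + 2 * (real h)^2 - real n"
  define c2 where "c2 = real h + 4 - 2 * real n"
  have G: "G = [:c0, c1, c2, 1:]" unfolding G_def c0_def c1_def c2_def ..
  have pG: "poly G x = c0 + x * (c1 + x * (c2 + x))" for x unfolding G by simp
  have hr: "3 \<le> real h" "real h + 1 \<le> real n" using h by auto
  have Gm1: "poly G (-1) = (real n - real h) * (real h - 1)"
    unfolding pG c0_def c1_def c2_def by (simp add: algebra_simps power2_eq_square)
  have Gm1p: "poly G (-1) > 0" unfolding Gm1 using hr by (intro mult_pos_pos, auto)
  have Gh: "poly G (-1/2) = 3/8 - 3 * real h / 4"
    unfolding pG c0_def c1_def c2_def by (simp add: algebra_simps power2_eq_square)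
  have Ghn: "poly G (-1/2) < 0" unfolding Gh using hr by auto
  have G0: "poly G 0 = - real h * (real n - real h) - 2 * real h + 2"
    unfolding pG c0_def by (simp add: algebra_simps power2_eq_square)
  have "0 \<le> real h * (real n - real h)" using hr by (intro mult_nonneg_nonneg, auto)
  hence G0n: "poly G 0 < 0" unfolding G0 using hr by linarith
  have Gm2: "poly G (-2) = 3 * (real n - real h) * (real h - 2)"
    unfolding pG c0_def c1_def c2_def by (simp add: algebra_simps power2_eq_square)
  have Gm2p: "poly G (-2) > 0" unfolding Gm2 using hr by (intro mult_pos_pos, auto)
  obtain r2 where r2: "-1 < r2" "r2 < -1/2" "poly G r2 = 0"
    using poly_IVT_neg[of "-1" "-1/2" G] Gm1p Ghn by auto
  define b1 where "b1 = c2 + r2"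
  define b0 where "b0 = c1 + r2 * b1"
  have c0e: "c0 = - r2 * b0" using r2(3) unfolding pG b0_def b1_def by (simp add: algebra_simps)
  define q where "q = [:b0, b1, 1:]"
  have Gq: "G = [:-r2,1:] * q" unfolding G q_def
    by (simp add: c0e b0_def b1_def algebra_simps)
  have "poly G 0 = - r2 * b0" unfolding pG c0e by simp
  hence "0 < r2 * b0" using G0n by simp
  hence b0n: "b0 < 0" using r2 by (auto simp: zero_less_mult_iff)
  define D where "D = b1^2 - 4 * b0"
  define s where "s = sqrt D"
  have Dp: "D > b1^2" unfolding D_def using b0n by simp
  have D0: "0 \<le> D" using Dp zero_le_power2[of b1] by linarith
  have s2: "s^2 = D" unfolding s_def using D0 by simp
  have sgt: "\<bar>b1\<bar> < s" unfolding s_def using real_sqrt_less_mono[OF Dp] by simp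
  define r1 where "r1 = (- b1 + s) / 2"
  define r3 where "r3 = (- b1 - s) / 2"
  have q13: "q = [:-r1,1:] * [:-r3,1:]"
  proof -
    have e1: "b0 = r1 * r3" unfolding r1_def r3_def using s2 unfolding D_def
      by (simp add: field_simps power2_eq_square)
    have e2: "b1 = - r1 - r3" unfolding r1_def r3_def by (simp add: field_simps)
    show ?thesis unfolding q_def e1 e2 by (simp add: algebra_simps)
  qed
  have r1p: "0 < r1" unfolding r1_def using sgt by auto
  have "poly G (-2) = (-2 - r2) * ((-2 - r1) * (-2 - r3))" unfolding Gq q13 by (simp add: algebra_simps)
  hence "0 < (-2 - r2) * ((-2 - r1) * (-2 - r3))" using Gm2p by simp
  moreover have "-2 - r2 < 0" "-2 - r1 < 0" using r2 r1p by auto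
  ultimately have "0 < -2 - r3" by (auto simp: zero_less_mult_iff mult_less_0_iff)
  hence "r3 < -2" by simp
  moreover have "G = [:-r1,1:] * [:-r2,1:] * [:-r3,1:]" unfolding Gq q13 by (simp only: mult.left_commute mult.assoc)
  ultimately show ?thesis using r1p r2 by blast
qed



lemma sorted_wrt_replicate_refl: "P a a \<Longrightarrow> sorted_wrt P (replicate k a)"
  by (induction k) auto

theorem theorem2p5:
  fixes n h :: nat
  assumes "3 \<le> h" and "h \<le> n - 1"
  shows "dist_char_poly n (Khn_edge n h) =
           [:1, 1:] ^ (h - 2) * [:2, 1:] ^ (n - h - 1) *
           [: - real n * real h + (real h)^2 - 2 * real h + 2,
              5 - 2 * real h - 2 * real n * real h + 2 * (real h)^2 - real n,
              real h + 4 - 2 * real n,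
              1 :] \<and>
         (\<forall>ls. is_dist_spectrum n (Khn_edge n h) ls \<longrightarrow>
           ls ! 0 > 0 \<and> -1 < ls ! 1 \<and> ls ! 1 < -1/2 \<and> ls ! 2 = -1 \<and>
           ls ! (n - 2) \<in> {-1, -2} \<and> ls ! (n - 1) < -2)"
proof -
  have h3: "3 \<le> h" and hn: "h < n" using assms by auto
  note cp = charpoly_Khn[OF assms]
  obtain r1 r2 r3 where G: "[: - real n * real h + (real h)^2 - 2 * real h + 2,
              5 - 2 * real h - 2 * real n * real h + 2 * (real h)^2 - real n,
              real h + 4 - 2 * real n, 1 :] = [:-r1,1:] * [:-r2,1:] * [:-r3,1:]"
    and r: "0 < r1" "-1 < r2" "r2 < -1/2" "r3 < -2"
    using cubic_roots[OF h3 hn] by blast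
  define L0 where "L0 = [r1, r2] @ replicate (h-2) (-1) @ replicate (n-h-1) (-2) @ [r3]"
  have lenL0: "length L0 = n" unfolding L0_def using h3 hn by simp
  have prodL0: "(\<Prod>l\<leftarrow>L0. [:-l,1:]) = dist_char_poly n (Khn_edge n h)"
  proof -
    have "(\<Prod>l\<leftarrow>L0. [:-l,1:]) = [:-r1,1:] * ([:-r2,1:] * ([:1,1:]^(h-2) * ([:2,1:]^(n-h-1) * ([:-r3,1:] * 1))))"
      unfolding L0_def
      by (simp only: map_append prod_list.append map_replicate prod_list_replicate list.map
          prod_list.Cons prod_list.Nil minus_minus append.simps mult.assoc)
    also have "\<dots> = [:1,1:]^(h-2) * [:2,1:]^(n-h-1) * ([:-r1,1:] * [:-r2,1:] * [:-r3,1:])"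
      by (simp only: ac_simps mult_1_right)
    finally show ?thesis unfolding cp G .
  qed
  have sortedL0: "sorted_wrt (\<ge>) L0" unfolding L0_def using r
    by (auto simp: sorted_wrt_append intro: sorted_wrt_replicate_refl)
  show ?thesis
  proof (rule conjI[OF cp], intro allI impI)
    fix ls assume "is_dist_spectrum n (Khn_edge n h) ls"
    hence len: "length ls = n" and srt: "sorted_wrt (\<ge>) ls"
      and pl: "dist_char_poly n (Khn_edge n h) = (\<Prod>l\<leftarrow>ls. [:- l, 1:])"
      unfolding is_dist_spectrum_def by auto
    have ms: "mset ls = mset L0"
    proof (rule multiset_eqI)
      fix a
      show "count (mset ls) a = count (mset L0) a"
        using order_prod_linear[of a ls] order_prod_linear[of a L0] pl prodL0 by simp
    qed
    have s1: "sorted (rev ls)" using srt unfolding sorted_wrt_rev by simp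
    have s2: "sorted (rev L0)" using sortedL0 unfolding sorted_wrt_rev by simp
    have "sort (rev L0) = rev ls" by (rule properties_for_sort, use ms in simp, rule s1)
    moreover have "sort (rev L0) = rev L0" by (rule properties_for_sort, simp, rule s2)
    ultimately have lsL: "ls = L0" by simp
    have i012: "L0 ! 0 = r1" "L0 ! 1 = r2" "L0 ! 2 = -1" unfolding L0_def using h3
      by (auto simp: nth_append numeral_2_eq_2)
    have "L0 \<noteq> []" using lenL0 hn by auto
    hence "L0 ! (n - 1) = last L0" using last_conv_nth[of L0] lenL0 by simp
    also have "last L0 = r3" unfolding L0_def by simp
    finally have "L0 ! (n - 1) = r3" .
    moreover have "L0 ! (n - 2) \<in> {-1, -2}"
    proof -
      have "L0 ! (n - 2) = rev L0 ! 1" using rev_nth[of 1 L0] lenL0 hn h3 by (simp add: numeral_2_eq_2)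
      also have "rev L0 = r3 # (replicate (n-h-1) (-2) @ replicate (h-2) (-1) @ [r2, r1])"
        unfolding L0_def by simp
      finally show ?thesis using h3 by (cases "n - h - 1", auto simp: nth_append)
    qed
    ultimately show "ls ! 0 > 0 \<and> -1 < ls ! 1 \<and> ls ! 1 < -1/2 \<and> ls ! 2 = -1 \<and>
           ls ! (n - 2) \<in> {-1, -2} \<and> ls ! (n - 1) < -2"
      using i012 r lsL by simp
  qed
qed


end
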